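(* Let $X\in\mathbb{R}^{n\times p}$, $B^*\in\mathbb{R}^{p\times q}$, $E\in\mathbb{R}^{n\times q}$ and $Y=XB^*+E$. Let $f:\mathbb{R}^{n\times q}\to\mathbb{R}$ be a convex function, $\lambda>0$, and let $\hat B$ be a minimizer over $B\in\mathbb{R}^{p\times q}$ of $f(Y-XB)+\lambda\|B\|_{2,1}$. Let $\Delta=\hat B-B^*$ and $\mathcal S^*=\{j\in[p]:\|B^*_{j:}\|_2\ne0\}$. Assume there exists $Z\in\partial f(E)$ with $\|X^\top Z\|_{2,\infty}\le\lambda/2$. Then: (i) $\|\Delta_{\mathcal S^{*c}}\|_{2,1}\le3\|\Delta_{\mathcal S^*}\|_{2,1}$; (ii) if moreover $\Psi=\frac1nX^\top X$ satisfies $\Psi_{jj}=1$ and $\max_{j'\ne j}|\Psi_{jj'}|\le\frac{1}{7\alpha s}$ for all $j\in[p]$, for some integer $s\ge1$ with $|\mathcal S^*|\le s$ and some $\alpha>1$, then $$\|\Delta\|_{2,\infty}\le\Big(1+\frac{16}{7(\alpha-1)}\Big)\|\Psi\Delta\|_{2,\infty}.$$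
   Context: $M_{j:}$ is the $j$-th row of $M$; $\|M\|_{2,1}=\sum_j\|M_{j:}\|_2$, $\|M\|_{2,\infty}=\max_j\|M_{j:}\|_2$. For $\mathcal S\subset[p]$, $M_{\mathcal S}$ denotes the matrix equal to $M$ on the rows indexed by $\mathcal S$ and zero on the other rows; $\mathcal S^{*c}=[p]\setminus\mathcal S^*$. $\partial f$ is the convex subdifferential, with the inner product $\langle A,B\rangle=\operatorname{Tr}(A^\top B)$. *)

theory Defs
  imports "HOL-Analysis.Analysis"
begin

text \<open>Matrices are type-indexed: a real n x p matrix is \<open>real^'p^'n\<close>;
  row j of M is \<open>M $ j\<close>, and \<open>norm (M $ j)\<close> is its Euclidean norm.\<close>

definition norm21 :: "real^'c^'r \<Rightarrow> real" where
  "norm21 M = (\<Sum>j\<in>UNIV. norm (M $ j))"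

definition norm2inf :: "real^'c^'r \<Rightarrow> real" where
  "norm2inf M = Max (range (\<lambda>j. norm (M $ j)))"

definition restrict_rows :: "'r set \<Rightarrow> real^'c^'r \<Rightarrow> real^'c^'r" where
  "restrict_rows S M = (\<chi> j. if j \<in> S then M $ j else 0)"

definition frob_inner :: "real^'c^'r \<Rightarrow> real^'c^'r \<Rightarrow> real" where
  "frob_inner A B = (\<Sum>i\<in>UNIV. \<Sum>k\<in>UNIV. A $ i $ k * B $ i $ k)"

definition subdiff :: "(real^'c^'r \<Rightarrow> real) \<Rightarrow> real^'c^'r \<Rightarrow> (real^'c^'r) set" where
  "subdiff f E = {Z. \<forall>W. f W \<ge> f E + frob_inner Z (W - E)}"

definition row_support :: "real^'c^'r \<Rightarrow> 'r set" where
  "row_support M = {j. norm (M $ j) \<noteq> 0}"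

end

theory Submission
  imports Defs
begin

lemma norm2inf_ge: "norm (M $ j) \<le> norm2inf M"
  unfolding norm2inf_def by (rule Max_ge) auto

lemma norm2inf_ex: "\<exists>j. norm2inf M = norm (M $ j)"
proof -
  have "norm2inf M \<in> range (\<lambda>j. norm (M $ j))"
    unfolding norm2inf_def by (rule Max_in) auto
  then show ?thesis by auto
qed

lemma frob_inner_alt: "frob_inner A B = (\<Sum>i\<in>UNIV. inner (A $ i) (B $ i))"
  unfolding frob_inner_def inner_vec_def by simp

lemma frob_bound: "frob_inner A B \<le> norm2inf A * norm21 B"
proof -
  have "frob_inner A B \<le> (\<Sum>i\<in>UNIV. norm (A $ i) * norm (B $ i))"
    unfolding frob_inner_alt by (rule sum_mono) (metis Cauchy_Schwarz_ineq2 abs_le_D1)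
  also have "\<dots> \<le> (\<Sum>i\<in>UNIV. norm2inf A * norm (B $ i))"
    by (rule sum_mono) (simp add: mult_right_mono norm2inf_ge)
  also have "\<dots> = norm2inf A * norm21 B" unfolding norm21_def by (simp add: sum_distrib_left)
  finally show ?thesis .
qed

lemma frob_transpose: "frob_inner (transpose X ** Z) D = frob_inner Z (X ** D)"
proof -
  have "frob_inner (transpose X ** Z) D = (\<Sum>j\<in>UNIV. \<Sum>k\<in>UNIV. \<Sum>i\<in>UNIV. X $ i $ j * Z $ i $ k * D $ j $ k)"
    unfolding frob_inner_def matrix_matrix_mult_def transpose_def by (simp add: sum_distrib_right)
  also have "\<dots> = (\<Sum>j\<in>UNIV. \<Sum>i\<in>UNIV. \<Sum>k\<in>UNIV. X $ i $ j * Z $ i $ k * D $ j $ k)"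
    by (rule sum.cong[OF refl], rule sum.swap)
  also have "\<dots> = (\<Sum>i\<in>UNIV. \<Sum>j\<in>UNIV. \<Sum>k\<in>UNIV. X $ i $ j * Z $ i $ k * D $ j $ k)"
    by (rule sum.swap)
  also have "\<dots> = (\<Sum>i\<in>UNIV. \<Sum>k\<in>UNIV. \<Sum>j\<in>UNIV. X $ i $ j * Z $ i $ k * D $ j $ k)"
    by (rule sum.cong[OF refl], rule sum.swap)
  also have "\<dots> = frob_inner Z (X ** D)"
    unfolding frob_inner_def matrix_matrix_mult_def by (simp add: sum_distrib_left mult_ac)
  finally show ?thesis .
qed

lemma frob_uminus: "frob_inner Z (- W) = - frob_inner Z W"
  unfolding frob_inner_def by (simp add: sum_negf)

lemma norm21_split: "norm21 D = norm21 (restrict_rows S D) + norm21 (restrict_rows (- S) D)"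
  unfolding norm21_def restrict_rows_def
  by (simp add: sum.distrib[symmetric]) (rule sum.cong, auto)

lemma norm21_restrict_le:
  fixes D :: "real^'c^'r"
  shows "norm21 (restrict_rows S D) \<le> real (card S) * norm2inf D"
proof -
  have "norm21 (restrict_rows S D) = (\<Sum>j\<in>S. norm (D $ j))"
  proof -
    have "(\<Sum>j\<in>UNIV. norm (restrict_rows S D $ j)) = (\<Sum>j\<in>UNIV. if j \<in> S then norm (D $ j) else 0)"
      unfolding restrict_rows_def by (rule sum.cong) auto
    also have "\<dots> = (\<Sum>j\<in>S. norm (D $ j))" by (simp add: sum.If_cases)
    finally show ?thesis unfolding norm21_def .
  qed
  also have "\<dots> \<le> (\<Sum>j\<in>S. norm2inf D)" by (rule sum_mono) (rule norm2inf_ge)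
  also have "\<dots> = real (card S) * norm2inf D" by simp
  finally show ?thesis .
qed

theorem lemma2:
  fixes X :: "real^'p^'n" and Bstar Bhat :: "real^'q^'p" and E Y :: "real^'q^'n"
    and f :: "real^'q^'n \<Rightarrow> real" and lam :: real
  assumes Y_def: "Y = X ** Bstar + E"
    and f_convex: "convex_on UNIV f"
    and lam_pos: "lam > 0"
    and Bhat_min: "\<forall>B. f (Y - X ** Bhat) + lam * norm21 Bhat \<le> f (Y - X ** B) + lam * norm21 B"
    and Z_ex: "\<exists>Z \<in> subdiff f E. norm2inf (transpose X ** Z) \<le> lam / 2"
  shows "norm21 (restrict_rows (- row_support Bstar) (Bhat - Bstar))
           \<le> 3 * norm21 (restrict_rows (row_support Bstar) (Bhat - Bstar))
       \<and> (\<forall>(s::nat) (\<alpha>::real).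
            let Psi = (1 / real CARD('n)) *\<^sub>R (transpose X ** X) in
            s \<ge> 1 \<and> card (row_support Bstar) \<le> s \<and> \<alpha> > 1
            \<and> (\<forall>j. Psi $ j $ j = 1)
            \<and> (\<forall>j j'. j' \<noteq> j \<longrightarrow> \<bar>Psi $ j $ j'\<bar> \<le> 1 / (7 * \<alpha> * real s))
            \<longrightarrow> norm2inf (Bhat - Bstar)
                \<le> (1 + 16 / (7 * (\<alpha> - 1))) * norm2inf (Psi ** (Bhat - Bstar)))"
proof -
  define D where "D = Bhat - Bstar"
  define S where "S = row_support Bstar"
  obtain Z where Zs: "Z \<in> subdiff f E" and Zb: "norm2inf (transpose X ** Z) \<le> lam / 2"
    using Z_ex by blast
  have XB: "X ** Bhat = X ** Bstar + X ** D"
    using matrix_add_ldistrib[of X Bstar D] unfolding D_def by simp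
  have res: "Y - X ** Bhat = E - X ** D"
    unfolding Y_def XB by simp
  have res2: "Y - X ** Bstar = E" unfolding Y_def by simp
  have m: "f (E - X ** D) + lam * norm21 Bhat \<le> f E + lam * norm21 Bstar"
    using Bhat_min[rule_format, of Bstar] res res2 by simp
  have sg: "f (E - X ** D) \<ge> f E - frob_inner (transpose X ** Z) D"
  proof -
    have "f (E - X ** D) \<ge> f E + frob_inner Z ((E - X ** D) - E)"
      using Zs unfolding subdiff_def by blast
    moreover have "(E - X ** D) - E = - (X ** D)" by simp
    ultimately have "f (E - X ** D) \<ge> f E + frob_inner Z (- (X ** D))" by simp
    moreover have "frob_inner Z (- (X ** D)) = - frob_inner (transpose X ** Z) D"
      by (simp add: frob_uminus frob_transpose)
    ultimately show ?thesis by linarith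
  qed
  have fb: "frob_inner (transpose X ** Z) D \<le> lam / 2 * norm21 D"
  proof -
    have n0: "norm21 D \<ge> 0" unfolding norm21_def by (simp add: sum_nonneg)
    have "norm2inf (transpose X ** Z) * norm21 D \<le> lam / 2 * norm21 D"
      by (rule mult_right_mono[OF Zb n0])
    then show ?thesis using frob_bound[of "transpose X ** Z" D] by linarith
  qed
  have pw: "norm21 Bhat - norm21 Bstar \<ge> norm21 (restrict_rows (- S) D) - norm21 (restrict_rows S D)"
  proof -
    have "\<And>j. norm (Bhat $ j) - norm (Bstar $ j) \<ge>
        norm (restrict_rows (- S) D $ j) - norm (restrict_rows S D $ j)"
    proof -
      fix j
      show "norm (Bhat $ j) - norm (Bstar $ j) \<ge>
        norm (restrict_rows (- S) D $ j) - norm (restrict_rows S D $ j)"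
      proof (cases "j \<in> S")
        case True
        then show ?thesis unfolding restrict_rows_def D_def
          using norm_triangle_ineq2[of "Bstar $ j" "Bhat $ j"] by (simp add: norm_minus_commute)
      next
        case False
        then have "Bstar $ j = 0" unfolding S_def row_support_def by simp
        then show ?thesis using False unfolding restrict_rows_def D_def by simp
      qed
    qed
    then show ?thesis unfolding norm21_def
      by (simp add: sum_subtractf[symmetric] sum_mono)
  qed
  have part1: "norm21 (restrict_rows (- S) D) \<le> 3 * norm21 (restrict_rows S D)"
  proof -
    have "lam * (norm21 (restrict_rows (- S) D) - norm21 (restrict_rows S D))
        \<le> lam * (norm21 Bhat - norm21 Bstar)"
      using pw lam_pos by (simp only: mult_le_cancel_left_pos)
    also have "\<dots> \<le> lam / 2 * norm21 D"
    proof -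
      have "lam * (norm21 Bhat - norm21 Bstar) = lam * norm21 Bhat - lam * norm21 Bstar"
        by (rule right_diff_distrib)
      then show ?thesis using m sg fb by linarith
    qed
    also have "\<dots> = lam / 2 * (norm21 (restrict_rows S D) + norm21 (restrict_rows (- S) D))"
      using norm21_split[of D S] by simp
    finally have "lam * (norm21 (restrict_rows (- S) D) - 3 * norm21 (restrict_rows S D)) \<le> 0"
      by (simp add: algebra_simps)
    then show ?thesis using lam_pos by (simp add: mult_le_0_iff)
  qed
  show ?thesis
  proof (intro conjI allI impI)
    show "norm21 (restrict_rows (- row_support Bstar) (Bhat - Bstar))
           \<le> 3 * norm21 (restrict_rows (row_support Bstar) (Bhat - Bstar))"
      using part1 unfolding S_def D_def .
  next
    fix s :: nat and \<alpha> :: real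
    show "let Psi = (1 / real CARD('n)) *\<^sub>R (transpose X ** X) in
            s \<ge> 1 \<and> card (row_support Bstar) \<le> s \<and> \<alpha> > 1
            \<and> (\<forall>j. Psi $ j $ j = 1)
            \<and> (\<forall>j j'. j' \<noteq> j \<longrightarrow> \<bar>Psi $ j $ j'\<bar> \<le> 1 / (7 * \<alpha> * real s))
            \<longrightarrow> norm2inf (Bhat - Bstar)
                \<le> (1 + 16 / (7 * (\<alpha> - 1))) * norm2inf (Psi ** (Bhat - Bstar))"
      unfolding Let_def
    proof (intro impI)
      define Psi where "Psi = (1 / real CARD('n)) *\<^sub>R (transpose X ** X)"
      assume H: "s \<ge> 1 \<and> card (row_support Bstar) \<le> s \<and> \<alpha> > 1
            \<and> (\<forall>j. ((1 / real CARD('n)) *\<^sub>R (transpose X ** X)) $ j $ j = 1)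
            \<and> (\<forall>j j'. j' \<noteq> j \<longrightarrow> \<bar>((1 / real CARD('n)) *\<^sub>R (transpose X ** X)) $ j $ j'\<bar> \<le> 1 / (7 * \<alpha> * real s))"
      then have s1: "s \<ge> 1" and cS: "card S \<le> s" and a1: "\<alpha> > 1"
        and dg: "\<And>j. Psi $ j $ j = 1"
        and od: "\<And>j j'. j' \<noteq> j \<Longrightarrow> \<bar>Psi $ j $ j'\<bar> \<le> 1 / (7 * \<alpha> * real s)"
        unfolding Psi_def S_def by auto
      define c where "c = 1 / (7 * \<alpha> * real s)"
      have N0: "norm2inf D \<ge> 0" by (rule order_trans[OF norm_ge_zero norm2inf_ge])
      have cpos: "c > 0" unfolding c_def using s1 a1 by simp
      have l1: "norm21 D \<le> 4 * real s * norm2inf D"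
      proof -
        have "norm21 D \<le> 4 * norm21 (restrict_rows S D)"
          using part1 norm21_split[of D S] by simp
        also have "\<dots> \<le> 4 * (real (card S) * norm2inf D)"
          using norm21_restrict_le[of S D] by simp
        also have "\<dots> \<le> 4 * (real s * norm2inf D)"
        proof -
          have "real (card S) * norm2inf D \<le> real s * norm2inf D"
            using cS N0 by (intro mult_right_mono) simp_all
          then show ?thesis by simp
        qed
        finally show ?thesis by simp
      qed
      have row: "norm (D $ j) \<le> norm2inf (Psi ** D) + c * norm21 D" for j
      proof -
        have eq: "(Psi ** D) $ j = (\<Sum>j'\<in>UNIV. Psi $ j $ j' *\<^sub>R D $ j')"
          by (simp add: vec_eq_iff matrix_matrix_mult_def sum_component)
        have "(\<Sum>j'\<in>UNIV. Psi $ j $ j' *\<^sub>R D $ j') = D $ j + (\<Sum>j'\<in>UNIV - {j}. Psi $ j $ j' *\<^sub>R D $ j')"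
          by (subst sum.remove[of UNIV j]) (auto simp: dg)
        then have "D $ j = (Psi ** D) $ j - (\<Sum>j'\<in>UNIV - {j}. Psi $ j $ j' *\<^sub>R D $ j')"
          using eq by simp
        then have "norm (D $ j) = norm ((Psi ** D) $ j - (\<Sum>j'\<in>UNIV - {j}. Psi $ j $ j' *\<^sub>R D $ j'))"
          by (rule arg_cong)
        moreover have "norm ((Psi ** D) $ j - (\<Sum>j'\<in>UNIV - {j}. Psi $ j $ j' *\<^sub>R D $ j'))
          \<le> norm ((Psi ** D) $ j) + norm (\<Sum>j'\<in>UNIV - {j}. Psi $ j $ j' *\<^sub>R D $ j')"
          by (rule norm_triangle_ineq4)
        ultimately have "norm (D $ j) \<le> norm ((Psi ** D) $ j) + norm (\<Sum>j'\<in>UNIV - {j}. Psi $ j $ j' *\<^sub>R D $ j')"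
          by linarith
        also have "norm (\<Sum>j'\<in>UNIV - {j}. Psi $ j $ j' *\<^sub>R D $ j') \<le> (\<Sum>j'\<in>UNIV - {j}. c * norm (D $ j'))"
        proof (rule order_trans[OF norm_sum], rule sum_mono)
          fix j' assume "j' \<in> UNIV - {j}"
          then have "\<bar>Psi $ j $ j'\<bar> \<le> c" using od[of j' j] unfolding c_def by auto
          then have "\<bar>Psi $ j $ j'\<bar> * norm (D $ j') \<le> c * norm (D $ j')"
            by (rule mult_right_mono) simp
          then show "norm (Psi $ j $ j' *\<^sub>R D $ j') \<le> c * norm (D $ j')" by simp
        qed
        also have "\<dots> \<le> (\<Sum>j'\<in>UNIV. c * norm (D $ j'))"
          by (rule sum_mono2) (use cpos in auto)
        also have "\<dots> = c * norm21 D" unfolding norm21_def by (simp add: sum_distrib_left)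
        finally show ?thesis using norm2inf_ge[of "Psi ** D" j] by simp
      qed
      obtain j0 where j0: "norm2inf D = norm (D $ j0)" using norm2inf_ex by blast
      have "norm2inf D \<le> norm2inf (Psi ** D) + c * (4 * real s * norm2inf D)"
      proof -
        have "c * norm21 D \<le> c * (4 * real s * norm2inf D)"
          using l1 cpos by (intro mult_left_mono) simp_all
        then show ?thesis using row[of j0] j0 by linarith
      qed
      moreover have ceq: "c * (4 * real s) = 4 / (7 * \<alpha>)" unfolding c_def using s1 by simp
      moreover have "c * (4 * real s * norm2inf D) = 4 / (7 * \<alpha>) * norm2inf D"
      proof -
        have "c * (4 * real s * norm2inf D) = (c * (4 * real s)) * norm2inf D"
          by (simp only: mult.assoc)
        then show ?thesis using ceq by simp
      qed
      moreover have "norm2inf D * (1 - 4 / (7 * \<alpha>)) = norm2inf D - 4 / (7 * \<alpha>) * norm2inf D"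
        by (simp add: algebra_simps)
      ultimately have A: "norm2inf D * (1 - 4 / (7 * \<alpha>)) \<le> norm2inf (Psi ** D)"
        by linarith
      have k: "1 - 4 / (7 * \<alpha>) > 0" using a1 by (simp add: field_simps)
      have "(1 + 16 / (7 * (\<alpha> - 1))) * (1 - 4 / (7 * \<alpha>)) \<ge> 1"
        using a1 by (simp add: field_simps)
      then have "norm2inf D \<le> norm2inf D * ((1 + 16 / (7 * (\<alpha> - 1))) * (1 - 4 / (7 * \<alpha>)))"
        using mult_left_mono[OF _ N0] by fastforce
      also have "\<dots> \<le> (1 + 16 / (7 * (\<alpha> - 1))) * norm2inf (Psi ** D)"
      proof -
        have K0: "1 + 16 / (7 * (\<alpha> - 1)) \<ge> 0" using a1 by simp
        have "(1 + 16 / (7 * (\<alpha> - 1))) * (norm2inf D * (1 - 4 / (7 * \<alpha>)))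
            \<le> (1 + 16 / (7 * (\<alpha> - 1))) * norm2inf (Psi ** D)"
          by (rule mult_left_mono[OF A K0])
        then show ?thesis by (simp only: mult_ac)
      qed
      finally show "norm2inf (Bhat - Bstar) \<le> (1 + 16 / (7 * (\<alpha> - 1))) *
          norm2inf ((1 / real CARD('n)) *\<^sub>R (transpose X ** X) ** (Bhat - Bstar))"
        unfolding D_def Psi_def .
    qed
  qed
qed

end
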